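(* Let $\varepsilon>0$, let $E\subset\mathbb R^2$ be a measurable set of finite measure, and let $S\subset\mathbb R^2$ be a set containing balls of arbitrarily large radii. Then there exist $\rho_0>0$ and $\xi_0\in\mathbb R^2$ such that $B(\xi_0,\rho_0)\subset S$, $\|\phi_{\rho_0}*\mathbb 1_E-\mathbb 1_E\|_{L^2}<\varepsilon$, and $\int_E|\cos(\langle\xi_0,x\rangle)|\,dx\ge|E|/3$.
   Context: Fix a nonnegative Schwartz function $\phi$ on $\mathbb R^2$ with $\int\phi=1$ and $\widehat\phi$ supported in the unit ball $B(0,1)$, and put $\phi_\rho(x)=\rho^2\phi(\rho x)$ for $\rho>0$. *)

theory Defs
  imports "HOL-Analysis.Analysis"
begin

type_synonym R2 = "real^2"

inductive_set partial_derivs :: "(R2 \<Rightarrow> real) \<Rightarrow> (R2 \<Rightarrow> real) set" for f where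
  base: "f \<in> partial_derivs f"
| step: "g \<in> partial_derivs f \<Longrightarrow>
           (\<lambda>x. frechet_derivative g (at x) (axis i 1)) \<in> partial_derivs f"

definition schwartz :: "(R2 \<Rightarrow> real) \<Rightarrow> bool" where
  "schwartz f \<longleftrightarrow>
     (\<forall>g \<in> partial_derivs f.
        (\<forall>x. g differentiable (at x)) \<and>
        (\<forall>k::nat. bounded (range (\<lambda>x. (1 + norm x) ^ k * g x))))"

definition fourier :: "(R2 \<Rightarrow> real) \<Rightarrow> R2 \<Rightarrow> complex" where
  "fourier f \<xi> = integral\<^sup>L lborel (\<lambda>x. complex_of_real (f x) * exp (- (\<i> * complex_of_real (x \<bullet> \<xi>))))"

definition dilate :: "(R2 \<Rightarrow> real) \<Rightarrow> real \<Rightarrow> R2 \<Rightarrow> real" where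
  "dilate f \<rho> x = \<rho>^2 * f (\<rho> *\<^sub>R x)"

definition conv :: "(R2 \<Rightarrow> real) \<Rightarrow> (R2 \<Rightarrow> real) \<Rightarrow> R2 \<Rightarrow> real" where
  "conv f g x = integral\<^sup>L lebesgue (\<lambda>y. f (x - y) * g y)"

definition L2_sq :: "(R2 \<Rightarrow> real) \<Rightarrow> ennreal" where
  "L2_sq f = (\<integral>\<^sup>+ x. ennreal ((f x)^2) \<partial>lebesgue)"

end

theory Submission
  imports Defs
begin


lemma nn_integral_dilate_shift:
  fixes h :: "R2 \<Rightarrow> ennreal" and a :: R2
  assumes h: "h \<in> borel_measurable borel" and rho: "\<rho> > 0"
  shows "(\<integral>\<^sup>+ y. ennreal (\<rho>^2) * h (\<rho> *\<^sub>R (a - y)) \<partial>lborel) = (\<integral>\<^sup>+ z. h z \<partial>lborel)"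
proof -
  have c: "-\<rho> \<noteq> 0" using rho by simp
  have "(\<integral>\<^sup>+ z. h z \<partial>lborel) = (\<integral>\<^sup>+ z. h z \<partial>density (distr lborel borel (\<lambda>x. \<rho> *\<^sub>R a + (-\<rho>) *\<^sub>R x)) (\<lambda>_. \<bar>-\<rho>\<bar>^DIM(R2)))"
    using lborel_affine[OF c, of "\<rho> *\<^sub>R a"] by simp
  also have "\<dots> = (\<integral>\<^sup>+ z. ennreal (\<bar>-\<rho>\<bar>^DIM(R2)) * h z \<partial>distr lborel borel (\<lambda>x. \<rho> *\<^sub>R a + (-\<rho>) *\<^sub>R x))"
    by (subst nn_integral_density) (auto simp: h)
  also have "\<dots> = (\<integral>\<^sup>+ x. ennreal (\<bar>-\<rho>\<bar>^DIM(R2)) * h (\<rho> *\<^sub>R a + (-\<rho>) *\<^sub>R x) \<partial>lborel)"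
    using h by (subst nn_integral_distr) (simp_all add: measurable_compose[OF _ h] borel_measurable_times_ennreal)
  also have "\<dots> = (\<integral>\<^sup>+ y. ennreal (\<rho>^2) * h (\<rho> *\<^sub>R (a - y)) \<partial>lborel)"
    using rho by (simp add: scaleR_diff_right)
  finally show ?thesis by simp
qed

lemma nn_integral_dilate_shift2:
  fixes h :: "R2 \<Rightarrow> ennreal" and a :: R2
  assumes h: "h \<in> borel_measurable borel" and rho: "\<rho> > 0"
  shows "(\<integral>\<^sup>+ x. ennreal (\<rho>^2) * h (\<rho> *\<^sub>R (x - a)) \<partial>lborel) = (\<integral>\<^sup>+ z. h z \<partial>lborel)"
proof -
  have c: "\<rho> \<noteq> 0" using rho by simp
  have "(\<integral>\<^sup>+ z. h z \<partial>lborel) = (\<integral>\<^sup>+ z. h z \<partial>density (distr lborel borel (\<lambda>x. (-\<rho> *\<^sub>R a) + \<rho> *\<^sub>R x)) (\<lambda>_. \<bar>\<rho>\<bar>^DIM(R2)))"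
    using lborel_affine[OF c, of "-\<rho> *\<^sub>R a"] by simp
  also have "\<dots> = (\<integral>\<^sup>+ z. ennreal (\<bar>\<rho>\<bar>^DIM(R2)) * h z \<partial>distr lborel borel (\<lambda>x. (-\<rho> *\<^sub>R a) + \<rho> *\<^sub>R x))"
    by (subst nn_integral_density) (auto simp: h)
  also have "\<dots> = (\<integral>\<^sup>+ x. ennreal (\<bar>\<rho>\<bar>^DIM(R2)) * h ((-\<rho> *\<^sub>R a) + \<rho> *\<^sub>R x) \<partial>lborel)"
    using h by (subst nn_integral_distr) (simp_all add: measurable_compose[OF _ h] borel_measurable_times_ennreal)
  also have "\<dots> = (\<integral>\<^sup>+ x. ennreal (\<rho>^2) * h (\<rho> *\<^sub>R (x - a)) \<partial>lborel)"
    using rho by (simp add: scaleR_diff_right)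
  finally show ?thesis by simp
qed



definition tail :: "(R2 \<Rightarrow> real) \<Rightarrow> real \<Rightarrow> ennreal" where
  "tail \<phi> t = (\<integral>\<^sup>+ z. ennreal (\<phi> z) * indicator {z. t \<le> norm z} z \<partial>lborel)"

lemma kernel_facts:
  fixes \<phi> :: "R2 \<Rightarrow> real"
  assumes phib[measurable]: "\<phi> \<in> borel_measurable borel" and nonneg: "\<And>x. \<phi> x \<ge> 0"
    and int1: "(\<integral>\<^sup>+ x. ennreal (\<phi> x) \<partial>lborel) = 1" and rho: "\<rho> > 0"
  shows "(\<integral>\<^sup>+ y. ennreal (\<rho>^2 * \<phi> (\<rho> *\<^sub>R (x - y))) \<partial>lborel) = 1"
    and "(\<integral>\<^sup>+ x. ennreal (\<rho>^2 * \<phi> (\<rho> *\<^sub>R (x - y))) \<partial>lborel) = 1"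
    and "(\<integral>\<^sup>+ y. ennreal (\<rho>^2 * \<phi> (\<rho> *\<^sub>R (x - y))) * indicator {y. d \<le> dist x y} y \<partial>lborel) = tail \<phi> (\<rho> * d)"
    and "(\<integral>\<^sup>+ x. ennreal (\<rho>^2 * \<phi> (\<rho> *\<^sub>R (x - y))) * indicator {x. d \<le> dist x y} x \<partial>lborel) = tail \<phi> (\<rho> * d)"
proof -
  have m: "(\<lambda>z. ennreal (\<phi> z)) \<in> borel_measurable borel" by measurable
  have m2: "(\<lambda>z. ennreal (\<phi> z) * indicator {z. \<rho> * d \<le> norm z} z) \<in> borel_measurable borel" by measurable
  have e: "ennreal (\<rho>^2 * \<phi> w) = ennreal (\<rho>^2) * ennreal (\<phi> w)" for w
    using nonneg[of w] by (simp add: ennreal_mult)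
  have i: "indicator {y. d \<le> dist x y} y = (indicator {z. \<rho> * d \<le> norm z} (\<rho> *\<^sub>R (x - y)) :: ennreal)" for x y
    using rho by (simp add: indicator_def dist_norm)
  show "(\<integral>\<^sup>+ y. ennreal (\<rho>^2 * \<phi> (\<rho> *\<^sub>R (x - y))) \<partial>lborel) = 1"
    unfolding e using nn_integral_dilate_shift[OF m rho, of x] int1 by simp
  show "(\<integral>\<^sup>+ x. ennreal (\<rho>^2 * \<phi> (\<rho> *\<^sub>R (x - y))) \<partial>lborel) = 1"
    unfolding e using nn_integral_dilate_shift2[OF m rho, of y] int1 by simp
  show "(\<integral>\<^sup>+ y. ennreal (\<rho>^2 * \<phi> (\<rho> *\<^sub>R (x - y))) * indicator {y. d \<le> dist x y} y \<partial>lborel) = tail \<phi> (\<rho> * d)"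
    unfolding e i tail_def using nn_integral_dilate_shift[OF m2 rho, of x] by (simp add: mult.assoc)
  show "(\<integral>\<^sup>+ x. ennreal (\<rho>^2 * \<phi> (\<rho> *\<^sub>R (x - y))) * indicator {x. d \<le> dist x y} x \<partial>lborel) = tail \<phi> (\<rho> * d)"
  proof -
    have i2: "indicator {x. d \<le> dist x y} x = (indicator {z. \<rho> * d \<le> norm z} (\<rho> *\<^sub>R (x - y)) :: ennreal)" for x
      using rho by (simp add: indicator_def dist_norm)
    show ?thesis
      unfolding e i2 tail_def using nn_integral_dilate_shift2[OF m2 rho, of y] by (simp add: mult.assoc)
  qed
qed



lemma double_bound:
  fixes \<phi> :: "R2 \<Rightarrow> real" and A K :: "R2 set"
  assumes phib[measurable]: "\<phi> \<in> borel_measurable borel" and nonneg: "\<And>x. \<phi> x \<ge> 0"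
    and int1: "(\<integral>\<^sup>+ x. ennreal (\<phi> x) \<partial>lborel) = 1" and rho: "\<rho> > 0"
    and A[measurable]: "A \<in> sets borel" and K[measurable]: "K \<in> sets borel"
  shows "(\<integral>\<^sup>+ x. (\<integral>\<^sup>+ y. ennreal (\<rho>^2 * \<phi> (\<rho> *\<^sub>R (x - y)) *
            (indicator A x + indicator A y + indicator K x * of_bool (d \<le> dist x y) + indicator K y * of_bool (d \<le> dist x y))) \<partial>lborel) \<partial>lborel)
         = 2 * emeasure lborel A + 2 * emeasure lborel K * tail \<phi> (\<rho> * d)"
proof -
  define P where "P x y = ennreal (\<rho>^2 * \<phi> (\<rho> *\<^sub>R (x - y)))" for x y
  have Pm[measurable]: "(\<lambda>(x,y). P x y) \<in> borel_measurable (lborel \<Otimes>\<^sub>M lborel)"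
    unfolding P_def by measurable
  have split: "ennreal (\<rho>^2 * \<phi> (\<rho> *\<^sub>R (x - y)) *
            (indicator A x + indicator A y + indicator K x * of_bool (d \<le> dist x y) + indicator K y * of_bool (d \<le> dist x y)))
      = P x y * indicator A x + P x y * indicator A y + P x y * indicator K x * indicator {y. d \<le> dist x y} y
        + P x y * indicator K y * indicator {x. d \<le> dist x y} x" for x y
  proof -
    have s4: "ennreal (p*(a+b+c+e)) = ennreal p * ennreal a + ennreal p * ennreal b + ennreal p * ennreal c + ennreal p * ennreal e"
      if "p\<ge>0" "a\<ge>0" "b\<ge>0" "c\<ge>0" "e\<ge>0" for p a b c e :: real
      using that by (simp add: ennreal_mult ennreal_plus distrib_left)
    have i1: "ennreal (indicator K x * of_bool (d \<le> dist x y)) = indicator K x * indicator {y. d \<le> dist x y} y"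
      by (simp add: indicator_def)
    have i2: "ennreal (indicator K y * of_bool (d \<le> dist x y)) = indicator K y * indicator {x. d \<le> dist x y} x"
      by (simp add: indicator_def)
    show ?thesis
      unfolding P_def
      apply (subst s4)
      using nonneg[of "\<rho> *\<^sub>R (x - y)"] apply (simp_all add: i1 i2 mult.assoc ennreal_indicator)
      done
  qed
  have k1: "\<And>x. (\<integral>\<^sup>+ y. P x y \<partial>lborel) = 1" and k2: "\<And>y. (\<integral>\<^sup>+ x. P x y \<partial>lborel) = 1"
    and k3: "\<And>x. (\<integral>\<^sup>+ y. P x y * indicator {y. d \<le> dist x y} y \<partial>lborel) = tail \<phi> (\<rho> * d)"
    and k4: "\<And>y. (\<integral>\<^sup>+ x. P x y * indicator {x. d \<le> dist x y} x \<partial>lborel) = tail \<phi> (\<rho> * d)"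
    unfolding P_def using kernel_facts[OF phib nonneg int1 rho] by auto
  have t1: "(\<integral>\<^sup>+ x. (\<integral>\<^sup>+ y. P x y * indicator A x \<partial>lborel) \<partial>lborel) = emeasure lborel A"
    by (simp add: nn_integral_multc k1)
  have t2: "(\<integral>\<^sup>+ x. (\<integral>\<^sup>+ y. P x y * indicator A y \<partial>lborel) \<partial>lborel) = emeasure lborel A"
  proof -
    have "(\<integral>\<^sup>+ x. (\<integral>\<^sup>+ y. P x y * indicator A y \<partial>lborel) \<partial>lborel) = (\<integral>\<^sup>+ y. (\<integral>\<^sup>+ x. P x y * indicator A y \<partial>lborel) \<partial>lborel)"
      by (rule lborel_pair.Fubini'[symmetric]) measurable
    also have "\<dots> = emeasure lborel A" by (simp add: nn_integral_multc k2)
    finally show ?thesis .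
  qed
  have t3: "(\<integral>\<^sup>+ x. (\<integral>\<^sup>+ y. P x y * indicator K x * indicator {y. d \<le> dist x y} y \<partial>lborel) \<partial>lborel) = emeasure lborel K * tail \<phi> (\<rho> * d)"
  proof -
    have "(\<integral>\<^sup>+ x. (\<integral>\<^sup>+ y. P x y * indicator K x * indicator {y. d \<le> dist x y} y \<partial>lborel) \<partial>lborel)
        = (\<integral>\<^sup>+ x. indicator K x * (\<integral>\<^sup>+ y. P x y * indicator {y. d \<le> dist x y} y \<partial>lborel) \<partial>lborel)"
      by (subst nn_integral_cmult[symmetric]) (auto simp: mult_ac intro!: nn_integral_cong)
    also have "\<dots> = emeasure lborel K * tail \<phi> (\<rho> * d)"
      by (simp add: k3 nn_integral_multc)
    finally show ?thesis .
  qed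
  have t4: "(\<integral>\<^sup>+ x. (\<integral>\<^sup>+ y. P x y * indicator K y * indicator {x. d \<le> dist x y} x \<partial>lborel) \<partial>lborel) = emeasure lborel K * tail \<phi> (\<rho> * d)"
  proof -
    have "(\<integral>\<^sup>+ x. (\<integral>\<^sup>+ y. P x y * indicator K y * indicator {x. d \<le> dist x y} x \<partial>lborel) \<partial>lborel) 
       = (\<integral>\<^sup>+ y. (\<integral>\<^sup>+ x. P x y * indicator K y * indicator {x. d \<le> dist x y} x \<partial>lborel) \<partial>lborel)"
      by (rule lborel_pair.Fubini'[symmetric]) measurable
    also have "\<dots> = (\<integral>\<^sup>+ y. indicator K y * (\<integral>\<^sup>+ x. P x y * indicator {x. d \<le> dist x y} x \<partial>lborel) \<partial>lborel)"
      by (subst nn_integral_cmult[symmetric]) (auto simp: mult_ac intro!: nn_integral_cong)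
    also have "\<dots> = emeasure lborel K * tail \<phi> (\<rho> * d)"
      by (simp add: k4 nn_integral_multc)
    finally show ?thesis .
  qed
  have "(\<integral>\<^sup>+ x. (\<integral>\<^sup>+ y. ennreal (\<rho>^2 * \<phi> (\<rho> *\<^sub>R (x - y)) *
            (indicator A x + indicator A y + indicator K x * of_bool (d \<le> dist x y) + indicator K y * of_bool (d \<le> dist x y))) \<partial>lborel) \<partial>lborel)
     = (\<integral>\<^sup>+ x. (\<integral>\<^sup>+ y. P x y * indicator A x \<partial>lborel) + (\<integral>\<^sup>+ y. P x y * indicator A y \<partial>lborel)
          + (\<integral>\<^sup>+ y. P x y * indicator K x * indicator {y. d \<le> dist x y} y \<partial>lborel)
          + (\<integral>\<^sup>+ y. P x y * indicator K y * indicator {x. d \<le> dist x y} x \<partial>lborel) \<partial>lborel)"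
    unfolding split by (intro nn_integral_cong) (simp add: nn_integral_add)
  also have "\<dots> = (\<integral>\<^sup>+ x. (\<integral>\<^sup>+ y. P x y * indicator A x \<partial>lborel) \<partial>lborel) + (\<integral>\<^sup>+ x. (\<integral>\<^sup>+ y. P x y * indicator A y \<partial>lborel) \<partial>lborel)
          + (\<integral>\<^sup>+ x. (\<integral>\<^sup>+ y. P x y * indicator K x * indicator {y. d \<le> dist x y} y \<partial>lborel) \<partial>lborel)
          + (\<integral>\<^sup>+ x. (\<integral>\<^sup>+ y. P x y * indicator K y * indicator {x. d \<le> dist x y} x \<partial>lborel) \<partial>lborel)"
    by (simp add: nn_integral_add)
  also have "\<dots> = 2 * emeasure lborel A + 2 * emeasure lborel K * tail \<phi> (\<rho> * d)"
    unfolding t1 t2 t3 t4 by (simp add: mult_2 distrib_right add_ac)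
  finally show ?thesis .
qed



lemma pointwise_bound:
  fixes P Q :: "R2 \<Rightarrow> real" and E :: "R2 set" and c :: real
  assumes Pm[measurable]: "P \<in> borel_measurable borel" and P0: "\<And>y. P y \<ge> 0"
    and P1: "(\<integral>\<^sup>+ y. ennreal (P y) \<partial>lborel) = 1"
    and Qm[measurable]: "Q \<in> borel_measurable borel" and Q0: "\<And>y. Q y \<ge> 0" and Q4: "\<And>y. Q y \<le> 4"
    and E: "E \<in> sets lebesgue"
    and c: "c = 0 \<or> c = 1"
    and HQ: "\<And>y. \<bar>indicator E y - c\<bar> \<le> Q y"
  shows "ennreal ((integral\<^sup>L lebesgue (\<lambda>y. P y * indicator E y) - c)^2) \<le> (\<integral>\<^sup>+ y. ennreal (P y * Q y) \<partial>lborel)"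
proof -
  have intP: "integrable lborel P"
    by (rule integrableI_nonneg) (use P0 P1 in auto)
  have intPL: "integrable lebesgue P"
    using intP by (simp add: integrable_completion)
  have IP: "integral\<^sup>L lebesgue P = 1"
  proof -
    have "ennreal (integral\<^sup>L lborel P) = 1"
      using nn_integral_eq_integral[OF intP] P0 P1 by simp
    then show ?thesis by (simp add: integral_completion)
  qed
  have PQ4: "\<And>y. P y * Q y \<le> 4 * P y" by (metis P0 Q4 mult.commute mult_right_mono)
  have intPQ: "integrable lborel (\<lambda>y. P y * Q y)"
    by (rule Bochner_Integration.integrable_bound[of _ "\<lambda>y. 4 * P y"]) (use intP P0 Q0 PQ4 in \<open>auto intro!: AE_I2 simp: abs_mult\<close>)
  have intPQL: "integrable lebesgue (\<lambda>y. P y * Q y)"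
    using intPQ by (simp add: integrable_completion)
  have intPE: "integrable lebesgue (\<lambda>y. P y * indicator E y)"
    using integrable_mult_indicator[OF E intPL] by (simp add: mult.commute)
  define g where "g = integral\<^sup>L lebesgue (\<lambda>y. P y * indicator E y)"
  have g0: "g \<ge> 0" unfolding g_def by (rule Bochner_Integration.integral_nonneg) (use P0 in auto)
  have g1: "g \<le> 1" unfolding g_def IP[symmetric]
    by (rule integral_mono[OF intPE intPL]) (use P0 in \<open>auto intro!: mult_left_le simp: indicator_def\<close>)
  have key: "\<bar>g - c\<bar> \<le> integral\<^sup>L lebesgue (\<lambda>y. P y * Q y)"
  proof -
    have "g - c = integral\<^sup>L lebesgue (\<lambda>y. P y * (indicator E y - c))"
      unfolding g_def using IP intPE intPL by (simp add: right_diff_distrib)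
    then have "\<bar>g - c\<bar> \<le> integral\<^sup>L lebesgue (\<lambda>y. \<bar>P y * (indicator E y - c)\<bar>)"
      by (metis integral_abs_bound real_norm_def)
    also have "\<dots> \<le> integral\<^sup>L lebesgue (\<lambda>y. P y * Q y)"
    proof (rule integral_mono)
      show "integrable lebesgue (\<lambda>y. \<bar>P y * (indicator E y - c)\<bar>)"
        using intPE intPL by (simp add: right_diff_distrib)
      show "integrable lebesgue (\<lambda>y. P y * Q y)" by (rule intPQL)
      fix y show "\<bar>P y * (indicator E y - c)\<bar> \<le> P y * Q y"
        using P0[of y] HQ[of y] by (simp add: abs_mult mult_left_mono)
    qed
    finally show ?thesis .
  qed
  have sq: "(g - c)^2 \<le> \<bar>g - c\<bar>"
  proof (cases "c = 0")
    case True then show ?thesis using g0 g1 by (simp add: power2_eq_square mult_left_le)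
  next
    case False then have "c = 1" using c by simp
    have a: "(1 - g) * (1 - g) \<le> 1 - g" by (rule mult_left_le) (use g0 g1 in auto)
    have b: "(g - c)^2 = (1 - g) * (1 - g)" using \<open>c = 1\<close> by (simp add: power2_eq_square algebra_simps)
    have "\<bar>g - c\<bar> = 1 - g" using \<open>c = 1\<close> g1 by simp
    then show ?thesis using a b by simp
  qed
  have "(g - c)^2 \<le> integral\<^sup>L lborel (\<lambda>y. P y * Q y)"
    using sq key by (simp add: integral_completion)
  then have "ennreal ((g - c)^2) \<le> ennreal (integral\<^sup>L lborel (\<lambda>y. P y * Q y))"
    by (rule ennreal_leI)
  also have "\<dots> = (\<integral>\<^sup>+ y. ennreal (P y * Q y) \<partial>lborel)"
    using nn_integral_eq_integral[OF intPQ] P0 Q0 by simp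
  finally show ?thesis unfolding g_def .
qed



lemma emeasure_lebesgue_borel: "S \<in> sets borel \<Longrightarrow> emeasure lebesgue S = emeasure lborel S"
  using emeasure_completion[of S lborel] main_part_sets[of S lborel] by simp

lemma tail_small:
  fixes \<phi> :: "R2 \<Rightarrow> real"
  assumes phib[measurable]: "\<phi> \<in> borel_measurable borel" and nonneg: "\<And>x. \<phi> x \<ge> 0"
    and int1: "(\<integral>\<^sup>+ x. ennreal (\<phi> x) \<partial>lborel) = 1" and c: "c > 0"
  shows "\<exists>t0. \<forall>t\<ge>t0. tail \<phi> t < c"
proof -
  define f where "f n z = ennreal (\<phi> z) * indicator {z. real n \<le> norm z} z" for n :: nat and z
  have dec: "decseq f"
  proof (rule decseq_SucI, rule le_funI)
    fix n z show "f (Suc n) z \<le> f n z" unfolding f_def by (auto simp: indicator_def)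
  qed
  have fm: "\<And>i. f i \<in> borel_measurable lborel" unfolding f_def by measurable
  have ff: "\<And>i. (\<integral>\<^sup>+ x. f i x \<partial>lborel) < \<infinity>"
  proof -
    fix i
    have "(\<integral>\<^sup>+ x. f i x \<partial>lborel) \<le> (\<integral>\<^sup>+ x. ennreal (\<phi> x) \<partial>lborel)"
      unfolding f_def by (intro nn_integral_mono) (auto simp: indicator_def)
    then show "(\<integral>\<^sup>+ x. f i x \<partial>lborel) < \<infinity>" using int1 by (simp add: order_le_less_trans)
  qed
  have inf0: "(INF i. f i z) = 0" for z
  proof -
    obtain n :: nat where "norm z < n" using reals_Archimedean2 by blast
    then have "f n z = 0" unfolding f_def by (simp add: indicator_def)
    moreover have "(INF i. f i z) \<le> f n z" by (rule INF_lower) simp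
    ultimately show ?thesis by simp
  qed
  have "(INF i. integral\<^sup>N lborel (f i)) = 0"
    using nn_integral_monotone_convergence_INF_decseq[OF dec fm ff] inf0 by simp
  then obtain n where n: "integral\<^sup>N lborel (f n) < c"
    using c by (metis INF_less_iff)
  show ?thesis
  proof (intro exI allI impI)
    fix t assume t: "real n \<le> t"
    have "tail \<phi> t \<le> integral\<^sup>N lborel (f n)"
      unfolding tail_def f_def using t by (intro nn_integral_mono) (auto simp: indicator_def)
    then show "tail \<phi> t < c" using n by simp
  qed
qed



lemma partA:
  fixes \<phi> :: "R2 \<Rightarrow> real" and E :: "R2 set"
  assumes phib[measurable]: "\<phi> \<in> borel_measurable borel" and nonneg: "\<And>x. \<phi> x \<ge> 0"
    and int1: "(\<integral>\<^sup>+ x. ennreal (\<phi> x) \<partial>lborel) = 1"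
    and E: "E \<in> sets lebesgue" and Efin: "emeasure lebesgue E < \<infinity>" and eta: "\<eta> > 0"
  shows "\<exists>\<rho>>0. L2_sq (\<lambda>x. conv (dilate \<phi> \<rho>) (indicator E) x - indicator E x) < ennreal \<eta>"
proof -
  define e where "e = \<eta> / 16"
  have e0: "e > 0" using eta by (simp add: e_def)
  obtain U where U: "open U" "E \<subseteq> U" "emeasure lebesgue (U - E) < ennreal e"
    using sets_lebesgue_outer_open[OF E e0] by metis
  obtain T where T: "closed T" "T \<subseteq> E" "emeasure lebesgue (E - T) < ennreal e"
    using sets_lebesgue_inner_closed[OF E e0] by metis
  have Tl: "T \<in> sets lebesgue" using T(1) by (simp add: borel_closed sets_completionI_sets)
  have "\<exists>n::nat. emeasure lebesgue (T - cball 0 (real n)) < ennreal e"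
  proof -
    define A where "A n = T - cball 0 (real n)" for n :: nat
    have Asets: "range A \<subseteq> sets lebesgue" unfolding A_def using T(1)
      by (auto intro!: sets_completionI_sets sets.Diff[OF borel_closed borel_closed])
    have Adec: "decseq A" unfolding A_def decseq_def by auto
    have Afin: "emeasure lebesgue (A i) \<noteq> \<infinity>" for i
    proof -
      have "emeasure lebesgue (A i) \<le> emeasure lebesgue E"
        using Asets E T(2) unfolding A_def by (intro emeasure_mono) auto
      then show ?thesis using Efin by (auto simp: top_unique)
    qed
    have Aint: "(\<Inter>i. A i) = {}"
    proof -
      have "x \<notin> A (nat \<lceil>norm x\<rceil>)" for x unfolding A_def
        by (simp add: dist_norm)
      then show ?thesis by blast
    qed
    have "(\<lambda>i. emeasure lebesgue (A i)) \<longlonglongrightarrow> 0"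
      using Lim_emeasure_decseq[OF Asets Adec Afin] Aint by simp
    then have "eventually (\<lambda>i. emeasure lebesgue (A i) < ennreal e) sequentially"
      using e0 by (intro order_tendstoD(2)) auto
    then show ?thesis unfolding A_def by (meson eventually_sequentially order_refl)
  qed
  then obtain n :: nat where n: "emeasure lebesgue (T - cball 0 (real n)) < ennreal e" by blast
  define K where "K = T \<inter> cball 0 (real n)"
  have Kc: "compact K" unfolding K_def using T(1) by auto
  have KE: "K \<subseteq> E" unfolding K_def using T by auto
  have KU: "K \<subseteq> U" using KE U by auto
  obtain d where d: "d > 0" "\<And>x y. x \<in> K \<Longrightarrow> y \<in> - U \<Longrightarrow> d \<le> dist x y"
  proof -
    have "closed (- U)" "K \<inter> - U = {}" using U(1) KU by auto
    from separate_compact_closed[OF Kc this] show ?thesis using that by auto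
  qed
  define A where "A = U - K"
  have Ab[measurable]: "A \<in> sets borel" unfolding A_def using U(1) Kc by (intro sets.Diff borel_open borel_compact)
  have Kb[measurable]: "K \<in> sets borel" using Kc by (auto intro!: borel_compact)
  have Ul: "U \<in> sets lebesgue" using U(1) by (simp add: borel_open sets_completionI_sets)
  have cl: "cball 0 (real n) \<in> sets lebesgue" by (simp add: borel_closed sets_completionI_sets)
  have s123: "U - E \<in> sets lebesgue" "E - T \<in> sets lebesgue" "T - cball 0 (real n) \<in> sets lebesgue"
    using sets.Diff[OF Ul E] sets.Diff[OF E Tl] sets.Diff[OF Tl cl] by auto
  have emA: "emeasure lborel A < ennreal (3 * e)"
  proof -
    have "emeasure lborel A = emeasure lebesgue A" using emeasure_lebesgue_borel[OF Ab] by simp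
    also have "\<dots> \<le> emeasure lebesgue ((U - E) \<union> (E - T) \<union> (T - cball 0 (real n)))"
      by (rule emeasure_mono) (use s123 in \<open>auto simp: A_def K_def\<close>)
    also have "\<dots> \<le> emeasure lebesgue ((U - E) \<union> (E - T)) + emeasure lebesgue (T - cball 0 (real n))"
      by (rule emeasure_subadditive) (use s123 in auto)
    also have "\<dots> \<le> emeasure lebesgue (U - E) + emeasure lebesgue (E - T) + emeasure lebesgue (T - cball 0 (real n))"
      by (intro add_right_mono emeasure_subadditive) (use s123 in auto)
    also have "\<dots> < ennreal e + ennreal e + ennreal e"
        by (intro add_strict_mono) (use U(3) T(3) n in auto)
    also have "\<dots> = ennreal (3 * e)" using e0 by (simp add: ennreal_plus[symmetric])
    finally show ?thesis .
  qed
  define mr where "mr = measure lebesgue E"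
  have mr0: "mr \<ge> 0" unfolding mr_def by simp
  have emE: "emeasure lebesgue E = ennreal mr"
    unfolding mr_def using Efin by (simp add: emeasure_eq_ennreal_measure)
  have emK: "emeasure lborel K \<le> ennreal mr"
  proof -
    have "emeasure lborel K = emeasure lebesgue K" using emeasure_lebesgue_borel[OF Kb] by simp
    also have "\<dots> \<le> emeasure lebesgue E" by (rule emeasure_mono[OF KE E])
    finally show ?thesis using emE by simp
  qed
  define c where "c = \<eta> / (4 * (mr + 1))"
  have c0: "c > 0" unfolding c_def using eta mr0 by simp
  obtain t0 where t0: "\<And>t. t \<ge> t0 \<Longrightarrow> tail \<phi> t < ennreal c"
    using tail_small[OF phib nonneg int1, of "ennreal c"] c0 by auto
  define \<rho> where "\<rho> = (\<bar>t0\<bar> + 1) / d"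
  have rho: "\<rho> > 0" unfolding \<rho>_def using d by simp
  have rhod: "\<rho> * d \<ge> t0" unfolding \<rho>_def using d by simp
  define Q where "Q x y = (indicator A x + indicator A y + indicator K x * of_bool (d \<le> dist x y) + indicator K y * of_bool (d \<le> dist x y) :: real)" for x y :: R2
  have pw: "ennreal ((conv (dilate \<phi> \<rho>) (indicator E) x - indicator E x)^2)
      \<le> (\<integral>\<^sup>+ y. ennreal (\<rho>^2 * \<phi> (\<rho> *\<^sub>R (x - y)) * Q x y) \<partial>lborel)" for x
  proof -
    have cv: "conv (dilate \<phi> \<rho>) (indicator E) x = integral\<^sup>L lebesgue (\<lambda>y. \<rho>^2 * \<phi> (\<rho> *\<^sub>R (x - y)) * indicator E y)"
      by (simp add: conv_def dilate_def)
    have HQ: "\<bar>indicator E y - indicator E x\<bar> \<le> Q x y" for y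
    proof -
      have dd: "x \<in> K \<Longrightarrow> y \<notin> U \<Longrightarrow> d \<le> dist x y" "y \<in> K \<Longrightarrow> x \<notin> U \<Longrightarrow> d \<le> dist x y"
        using d(2)[of x y] d(2)[of y x] by (auto simp: dist_commute)
      show ?thesis unfolding Q_def A_def using dd KE U(2)
        by (auto simp: indicator_def)
    qed
    show ?thesis unfolding cv
    proof (rule pointwise_bound)
      show "(\<lambda>y. \<rho>^2 * \<phi> (\<rho> *\<^sub>R (x - y))) \<in> borel_measurable borel" by measurable
      show "\<And>y. \<rho>^2 * \<phi> (\<rho> *\<^sub>R (x - y)) \<ge> 0" using nonneg by simp
      show "(\<integral>\<^sup>+ y. ennreal (\<rho>^2 * \<phi> (\<rho> *\<^sub>R (x - y))) \<partial>lborel) = 1"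
        by (rule kernel_facts(1)[OF phib nonneg int1 rho])
      show "Q x \<in> borel_measurable borel" unfolding Q_def by measurable
      show "\<And>y. Q x y \<ge> 0" unfolding Q_def by simp
      show "\<And>y. Q x y \<le> 4" unfolding Q_def by (simp add: indicator_def)
      show "E \<in> sets lebesgue" by (rule E)
      show "indicator E x = 0 \<or> indicator E x = (1::real)" by (simp add: indicator_def)
      show "\<And>y. \<bar>indicator E y - indicator E x\<bar> \<le> Q x y" by (rule HQ)
    qed
  qed
  have "L2_sq (\<lambda>x. conv (dilate \<phi> \<rho>) (indicator E) x - indicator E x)
      \<le> (\<integral>\<^sup>+ x. (\<integral>\<^sup>+ y. ennreal (\<rho>^2 * \<phi> (\<rho> *\<^sub>R (x - y)) * Q x y) \<partial>lborel) \<partial>lebesgue)"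
    unfolding L2_sq_def by (intro nn_integral_mono pw)
  also have "\<dots> = (\<integral>\<^sup>+ x. (\<integral>\<^sup>+ y. ennreal (\<rho>^2 * \<phi> (\<rho> *\<^sub>R (x - y)) * Q x y) \<partial>lborel) \<partial>lborel)"
    by (rule nn_integral_completion)
  also have "\<dots> = 2 * emeasure lborel A + 2 * emeasure lborel K * tail \<phi> (\<rho> * d)"
    unfolding Q_def by (rule double_bound[OF phib nonneg int1 rho Ab Kb])
  also have "\<dots> < ennreal \<eta>"
  proof -
    obtain a where a: "emeasure lborel A = ennreal a" "a \<ge> 0" "a < 3 * e"
      using emA by (metis ennreal_cases ennreal_less_iff ennreal_less_top not_less_iff_gr_or_eq top.not_eq_extremum)
    obtain k where k: "emeasure lborel K = ennreal k" "k \<ge> 0" "k \<le> mr"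
      using emK by (metis ennreal_cases ennreal_le_iff mr0 top.extremum_uniqueI ennreal_neq_top)
    have tl: "tail \<phi> (\<rho> * d) < ennreal c" using t0 rhod by simp
    obtain t where t: "tail \<phi> (\<rho> * d) = ennreal t" "t \<ge> 0" "t < c"
      using tl by (metis ennreal_cases ennreal_less_iff ennreal_less_top not_less_iff_gr_or_eq top.not_eq_extremum)
    have "2 * emeasure lborel A + 2 * emeasure lborel K * tail \<phi> (\<rho> * d) = ennreal (2 * a + 2 * k * t)"
      using a k t by (simp add: ennreal_mult ennreal_plus)
    moreover have "2 * a + 2 * k * t < \<eta>"
    proof -
      have "k * t \<le> mr * c" using k t by (intro mult_mono) auto
      moreover have "mr * c \<le> \<eta> / 4" unfolding c_def using mr0 eta
        by (simp add: field_simps)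
      ultimately show ?thesis using a unfolding e_def by linarith
    qed
    ultimately show ?thesis using eta by (simp add: ennreal_lessI)
  qed
  finally show ?thesis using rho by blast
qed



lemma sin_diff_sum: "sin (u + v) - sin (u - v) = 2 * cos u * sin (v::real)"
  by (simp add: sin_add sin_diff)

lemma cos_sum_tele:
  fixes a b :: real
  shows "2 * sin (b/2) * (\<Sum>k<N. cos (a + real k * b)) = sin (a + (real N - 1/2) * b) - sin (a - b/2)"
proof (induction N)
  case 0 then show ?case by (simp add: algebra_simps)
next
  case (Suc N)
  have "2 * sin (b/2) * cos (a + real N * b) = sin (a + real N * b + b/2) - sin (a + real N * b - b/2)"
    using sin_diff_sum[of "a + real N * b" "b/2"] by (simp add: mult_ac)
  moreover have "a + real N * b + b/2 = a + (real (Suc N) - 1/2) * b" by (simp add: algebra_simps)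
  moreover have "a + real N * b - b/2 = a + (real N - 1/2) * b" by (simp add: algebra_simps)
  ultimately show ?case using Suc by (simp add: distrib_left)
qed

lemma cos_sum_bound:
  fixes a b s0 :: real
  assumes "s0 > 0" "\<bar>sin (b/2)\<bar> \<ge> s0"
  shows "(\<Sum>k<N. cos (a + real k * b)) \<ge> - 1 / s0"
proof -
  let ?S = "\<Sum>k<N. cos (a + real k * b)"
  have "\<bar>2 * sin (b/2) * ?S\<bar> \<le> 2"
    unfolding cos_sum_tele using abs_sin_le_one[of "a + (real N - 1/2) * b"] abs_sin_le_one[of "a - b/2"] by linarith
  then have "\<bar>sin (b/2)\<bar> * \<bar>?S\<bar> \<le> 1" by (simp add: abs_mult)
  then have "s0 * \<bar>?S\<bar> \<le> 1" using assms by (meson abs_ge_zero mult_right_mono order_trans)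
  then have "\<bar>?S\<bar> \<le> 1 / s0" using assms by (simp add: field_simps mult.commute)
  then show ?thesis by (simp add: abs_le_iff)
qed

lemma cos_sq_sum_bound:
  fixes a b s0 :: real
  assumes "s0 > 0" "\<bar>sin b\<bar> \<ge> s0"
  shows "(\<Sum>k<N. (cos (a + real k * b))^2) \<ge> real N / 2 - 1 / (2 * s0)"
proof -
  have eq: "(cos t)^2 = 1/2 + cos (2 * t) / 2" for t :: real
    using cos_double_cos[of t] by (simp add: power2_eq_square field_simps)
  have "(\<Sum>k<N. (cos (a + real k * b))^2) = (\<Sum>k<N. 1/2 + cos (2*a + real k * (2*b)) / 2)"
    by (intro sum.cong refl) (simp add: eq distrib_left mult_ac)
  also have "\<dots> = real N / 2 + (\<Sum>k<N. cos (2*a + real k * (2*b))) / 2"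
    by (simp add: sum.distrib sum_divide_distrib)
  finally have e: "(\<Sum>k<N. (cos (a + real k * b))^2) = real N / 2 + (\<Sum>k<N. cos (2*a + real k * (2*b))) / 2" .
  have "(\<Sum>k<N. cos (2*a + real k * (2*b))) \<ge> - 1 / s0"
    using cos_sum_bound[of s0 "2*b" "2*a" N] assms by simp
  then show ?thesis unfolding e by (simp add: field_simps)
qed



lemma big_strip:
  fixes E :: "R2 set"
  assumes E: "E \<in> sets lebesgue" and Efin: "emeasure lebesgue E < \<infinity>"
  shows "\<exists>n::nat. measure lebesgue (E \<inter> {x. 1/(real n+1) \<le> \<bar>x$1\<bar> \<and> \<bar>x$1\<bar> \<le> real n + 1}) \<ge> 7/10 * measure lebesgue E"
proof -
  define A where "A n = E \<inter> {x. 1/(real n+1) \<le> \<bar>x$1\<bar> \<and> \<bar>x$1\<bar> \<le> real n + 1}" for n :: nat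
  have Bb: "{x::R2. 1/(real n+1) \<le> \<bar>x$1\<bar> \<and> \<bar>x$1\<bar> \<le> real n + 1} \<in> sets borel" for n
    by measurable
  have As: "range A \<subseteq> sets lebesgue"
    unfolding A_def using E sets_completionI_sets[OF Bb] by (auto intro!: sets.Int)
  have Ainc: "incseq A"
  proof (rule incseq_SucI)
    fix n
    have "1/(real (Suc n)+1) \<le> 1/(real n+1)" by (simp add: frac_le)
    then show "A n \<subseteq> A (Suc n)" unfolding A_def by auto
  qed
  have H: "{x::R2. x$1 = 0} \<in> null_sets lebesgue"
    using negligible_standard_hyperplane_cart[of 1] negligible_iff_null_sets by blast
  have Aun: "(\<Union>i. A i) = E - {x. x$1 = 0}"
  proof
    show "(\<Union>i. A i) \<subseteq> E - {x. x$1 = 0}" unfolding A_def by auto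
    show "E - {x. x$1 = 0} \<subseteq> (\<Union>i. A i)"
    proof
      fix x assume x: "x \<in> E - {x. x$1 = 0}"
      then have p: "\<bar>x$1\<bar> > 0" by auto
      obtain n :: nat where n: "max \<bar>x$1\<bar> (1 / \<bar>x$1\<bar>) < real n" using reals_Archimedean2 by blast
      have "1/(real n+1) \<le> \<bar>x$1\<bar>"
      proof -
        have "1 / \<bar>x$1\<bar> \<le> real n + 1" using n by linarith
        then show ?thesis using p by (simp add: field_simps)
      qed
      moreover have "\<bar>x$1\<bar> \<le> real n + 1" using n by linarith
      ultimately show "x \<in> (\<Union>i. A i)" using x unfolding A_def by auto
    qed
  qed
  have fin: "emeasure lebesgue (\<Union>i. A i) \<noteq> \<infinity>"
  proof -
    have "emeasure lebesgue (\<Union>i. A i) \<le> emeasure lebesgue E"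
      using As E by (intro emeasure_mono) (auto simp: A_def)
    then show ?thesis using Efin by (auto simp: top_unique)
  qed
  have lim: "(\<lambda>i. measure lebesgue (A i)) \<longlonglongrightarrow> measure lebesgue E"
    using Lim_measure_incseq[OF As Ainc fin] unfolding Aun measure_Diff_null_set[OF E H] .
  show ?thesis
  proof (cases "measure lebesgue E = 0")
    case True then show ?thesis by (simp add: measure_nonneg)
  next
    case False
    then have "7/10 * measure lebesgue E < measure lebesgue E" using measure_nonneg[of lebesgue E] by linarith
    then have "eventually (\<lambda>i. 7/10 * measure lebesgue E < measure lebesgue (A i)) sequentially"
      by (rule order_tendstoD(1)[OF lim])
    then obtain n where "7/10 * measure lebesgue E < measure lebesgue (A n)"
      by (meson eventually_sequentially order_refl)
    then show ?thesis unfolding A_def by (auto intro: less_imp_le)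
  qed
qed



lemma partB:
  fixes E S :: "R2 set" and \<rho>0 :: real
  assumes E: "E \<in> sets lebesgue" and Efin: "emeasure lebesgue E < \<infinity>" and rho0: "\<rho>0 > 0"
    and S_balls: "\<forall>R::real. \<exists>\<xi> r. r \<ge> R \<and> ball \<xi> r \<subseteq> S"
  shows "\<exists>\<xi>0. ball \<xi>0 \<rho>0 \<subseteq> S \<and> (LINT x:E|lebesgue. \<bar>cos (\<xi>0 \<bullet> x)\<bar>) \<ge> measure lebesgue E / 3"
proof -
  obtain n :: nat where n: "measure lebesgue (E \<inter> {x. 1/(real n+1) \<le> \<bar>x$1\<bar> \<and> \<bar>x$1\<bar> \<le> real n + 1}) \<ge> 7/10 * measure lebesgue E"
    using big_strip[OF E Efin] by blast
  define M where "M = real n + 1"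
  have M1: "M \<ge> 1" unfolding M_def by simp
  define A where "A = E \<inter> {x. 1/M \<le> \<bar>x$1\<bar> \<and> \<bar>x$1\<bar> \<le> M}"
  have nA: "measure lebesgue A \<ge> 7/10 * measure lebesgue E" using n unfolding A_def M_def .
  have Bb: "{x::R2. 1/M \<le> \<bar>x$1\<bar> \<and> \<bar>x$1\<bar> \<le> M} \<in> sets borel" by measurable
  have Al: "A \<in> sets lebesgue" unfolding A_def using E sets_completionI_sets[OF Bb] by auto
  have AE: "A \<subseteq> E" unfolding A_def by auto
  have Afin: "emeasure lebesgue A < \<infinity>" using emeasure_mono[OF AE E] Efin by (simp add: order_le_less_trans)
  define h where "h = 1 / M"
  define s0 where "s0 = sin (h / M)"
  have MM: "1 \<le> M * M" using M1 by (metis mult_mono' mult_1 zero_le_one)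
  have hM: "h / M > 0" "h / M \<le> 1" unfolding h_def using M1 MM by (auto simp: field_simps)
  have s0: "s0 > 0" unfolding s0_def using hM pi_gt3 by (intro sin_gt_zero) auto
  have sinb: "\<bar>sin (h * x$1)\<bar> \<ge> s0" if "x \<in> A" for x
  proof -
    have x: "1/M \<le> \<bar>x$1\<bar>" "\<bar>x$1\<bar> \<le> M" using that unfolding A_def by auto
    have l: "h / M \<le> h * \<bar>x$1\<bar>" using x unfolding h_def using M1 by (simp add: field_simps)
    have u: "h * \<bar>x$1\<bar> \<le> 1" using x unfolding h_def using M1 by (simp add: field_simps)
    have "sin (h / M) \<le> sin (h * \<bar>x$1\<bar>)"
      using l u hM pi_gt3 by (subst sin_mono_le_eq) (linarith+)
    moreover have "\<bar>sin (h * x$1)\<bar> = \<bar>sin (h * \<bar>x$1\<bar>)\<bar>"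
      by (cases "x$1 \<ge> 0") (auto simp: abs_if)
    moreover have "0 \<le> sin (h * \<bar>x$1\<bar>)" using calculation(1) s0 unfolding s0_def by linarith
    ultimately show ?thesis unfolding s0_def by simp
  qed
  define N :: nat where "N = nat \<lceil>30 / s0\<rceil> + 1"
  have N: "real N \<ge> 30 / s0" "N > 0" unfolding N_def by linarith+
  obtain c r where cr: "r \<ge> real N * h + \<rho>0" "ball c r \<subseteq> S" using S_balls by blast
  define \<xi> where "\<xi> k = c + (real k * h) *\<^sub>R axis 1 (1::real)" for k :: nat
  have h0: "h > 0" unfolding h_def using M1 by simp
  have ballk: "ball (\<xi> k) \<rho>0 \<subseteq> S" if "k < N" for k
  proof -
    have "dist c (\<xi> k) = real k * h" unfolding \<xi>_def using h0 by (simp add: dist_norm)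
    moreover have "real k * h \<le> real N * h" using that h0 by simp
    ultimately have dk: "dist c (\<xi> k) \<le> real N * h" by simp
    have "ball (\<xi> k) \<rho>0 \<subseteq> ball c r"
    proof
      fix y assume "y \<in> ball (\<xi> k) \<rho>0"
      then have "dist (\<xi> k) y < \<rho>0" by simp
      moreover have "dist c y \<le> dist c (\<xi> k) + dist (\<xi> k) y" by (rule dist_triangle)
      ultimately show "y \<in> ball c r" using dk cr(1) by simp
    qed
    then show ?thesis using cr(2) by blast
  qed
  have inner_xi: "\<xi> k \<bullet> x = c \<bullet> x + real k * (h * x$1)" for k x
    unfolding \<xi>_def by (simp add: inner_add_left inner_axis' inner_real_def algebra_simps)
  have cosm: "(\<lambda>x::R2. cos (\<xi> k \<bullet> x)) \<in> borel_measurable lebesgue" for k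
  proof -
    have "(\<lambda>x::R2. cos (\<xi> k \<bullet> x)) \<in> borel_measurable borel" by measurable
    then show ?thesis by (intro measurable_completion) simp
  qed
  have intAi: "integrable lebesgue (indicator A :: R2 \<Rightarrow> real)" using Al Afin by simp
  have intEi: "integrable lebesgue (indicator E :: R2 \<Rightarrow> real)" using E Efin by simp
  have intA: "integrable lebesgue (\<lambda>x. indicator A x * (cos (\<xi> k \<bullet> x))^2)" for k
  proof (rule Bochner_Integration.integrable_bound[OF intAi])
    show "(\<lambda>x. indicator A x * (cos (\<xi> k \<bullet> x))^2) \<in> borel_measurable lebesgue"
      by (intro borel_measurable_times borel_measurable_indicator Al borel_measurable_power cosm)
    show "AE x in lebesgue. norm (indicator A x * (cos (\<xi> k \<bullet> x))^2) \<le> norm (indicator A x :: real)"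
      by (intro AE_I2) (simp add: indicator_def abs_square_le_1)
  qed
  have intE: "integrable lebesgue (\<lambda>x. indicator E x *\<^sub>R \<bar>cos (\<xi> k \<bullet> x)\<bar>)" for k
  proof (rule Bochner_Integration.integrable_bound[OF intEi])
    show "(\<lambda>x. indicator E x *\<^sub>R \<bar>cos (\<xi> k \<bullet> x)\<bar>) \<in> borel_measurable lebesgue"
      by (intro borel_measurable_scaleR borel_measurable_indicator E borel_measurable_abs cosm)
    show "AE x in lebesgue. norm (indicator E x *\<^sub>R \<bar>cos (\<xi> k \<bullet> x)\<bar>) \<le> norm (indicator E x :: real)"
      by (intro AE_I2) (simp add: indicator_def)
  qed
  have Ik_le: "integral\<^sup>L lebesgue (\<lambda>x. indicator A x * (cos (\<xi> k \<bullet> x))^2) \<le> (LINT x:E|lebesgue. \<bar>cos (\<xi> k \<bullet> x)\<bar>)" for k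
    unfolding set_lebesgue_integral_def
  proof (rule integral_mono[OF intA intE])
    fix x
    have "(cos (\<xi> k \<bullet> x))^2 \<le> \<bar>cos (\<xi> k \<bullet> x)\<bar>"
    proof -
      have "\<bar>cos (\<xi> k \<bullet> x)\<bar> * \<bar>cos (\<xi> k \<bullet> x)\<bar> \<le> \<bar>cos (\<xi> k \<bullet> x)\<bar> * 1"
        by (intro mult_left_mono abs_cos_le_one abs_ge_zero)
      moreover have "(cos (\<xi> k \<bullet> x))^2 = \<bar>cos (\<xi> k \<bullet> x)\<bar> * \<bar>cos (\<xi> k \<bullet> x)\<bar>"
        by (metis power2_abs power2_eq_square)
      ultimately show ?thesis by simp
    qed
    then show "indicator A x * (cos (\<xi> k \<bullet> x))^2 \<le> indicator E x *\<^sub>R \<bar>cos (\<xi> k \<bullet> x)\<bar>"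
      using AE by (auto simp: indicator_def)
  qed
  define X where "X = real N / 2 - 1 / (2 * s0)"
  have sum_ge: "(\<Sum>k<N. integral\<^sup>L lebesgue (\<lambda>x. indicator A x * (cos (\<xi> k \<bullet> x))^2)) \<ge> X * measure lebesgue A"
  proof -
    have "(\<Sum>k<N. integral\<^sup>L lebesgue (\<lambda>x. indicator A x * (cos (\<xi> k \<bullet> x))^2))
        = integral\<^sup>L lebesgue (\<lambda>x. \<Sum>k<N. indicator A x * (cos (\<xi> k \<bullet> x))^2)"
      by (rule Bochner_Integration.integral_sum[symmetric]) (use intA in auto)
    also have "\<dots> \<ge> integral\<^sup>L lebesgue (\<lambda>x. X * indicator A x)"
    proof (rule integral_mono)
      show "integrable lebesgue (\<lambda>x. X * indicator A x)" using intAi by simp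
      show "integrable lebesgue (\<lambda>x. \<Sum>k<N. indicator A x * (cos (\<xi> k \<bullet> x))^2)"
        by (rule Bochner_Integration.integrable_sum) (rule intA)
      fix x
      show "X * indicator A x \<le> (\<Sum>k<N. indicator A x * (cos (\<xi> k \<bullet> x))^2)"
      proof (cases "x \<in> A")
        case True
        have "(\<Sum>k<N. (cos (c \<bullet> x + real k * (h * x$1)))^2) \<ge> X"
          unfolding X_def by (rule cos_sq_sum_bound[OF s0 sinb[OF True]])
        then show ?thesis using True by (simp add: inner_xi)
      qed simp
    qed
    also have "integral\<^sup>L lebesgue (\<lambda>x. X * indicator A x) = X * measure lebesgue A" by simp
    finally show ?thesis .
  qed
  show ?thesis
  proof (cases "measure lebesgue E = 0")
    case True
    have "0 \<le> (LINT x:E|lebesgue. \<bar>cos (\<xi> 0 \<bullet> x)\<bar>)"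
      unfolding set_lebesgue_integral_def by (rule Bochner_Integration.integral_nonneg) simp
    then show ?thesis using ballk[of 0] N True by auto
  next
    case False
    then have mE: "measure lebesgue E > 0" using measure_nonneg[of lebesgue E] by linarith
    show ?thesis
    proof (rule ccontr)
      assume "\<not> ?thesis"
      then have lt: "(LINT x:E|lebesgue. \<bar>cos (\<xi> k \<bullet> x)\<bar>) < measure lebesgue E / 3" if "k < N" for k
        using ballk[OF that] by (meson not_le)
      have "(\<Sum>k<N. integral\<^sup>L lebesgue (\<lambda>x. indicator A x * (cos (\<xi> k \<bullet> x))^2)) < (\<Sum>k<N. measure lebesgue E / 3)"
      proof (rule sum_strict_mono)
        show "finite {..<N}" by simp
        show "{..<N} \<noteq> {}" using N(2) by auto
        fix k assume "k \<in> {..<N}"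
        then show "integral\<^sup>L lebesgue (\<lambda>x. indicator A x * (cos (\<xi> k \<bullet> x))^2) < measure lebesgue E / 3"
          using le_less_trans[OF Ik_le lt] by simp
      qed
      then have A1: "X * measure lebesgue A < real N * (measure lebesgue E / 3)" using sum_ge by simp
      have s0inv: "1 / s0 \<le> real N / 30" using N(1) s0 by (simp add: field_simps)
      have X0: "X \<ge> 0" unfolding X_def using s0inv N(2) by simp
      have "X * (7/10 * measure lebesgue E) \<le> X * measure lebesgue A"
        using nA X0 by (rule mult_left_mono)
      then have "(X * (7/10) - real N / 3) * measure lebesgue E < 0" using A1 by (simp add: algebra_simps)
      then have "X * (7/10) - real N / 3 < 0" using mE by (simp add: mult_less_0_iff)
      then show False unfolding X_def using s0inv N(2) by simp
    qed
  qed
qed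


theorem lemma8p7:
  fixes \<phi> :: "R2 \<Rightarrow> real" and \<epsilon> :: real and E S :: "R2 set"
  assumes phi_schwartz: "schwartz \<phi>"
    and phi_nonneg: "\<forall>x. \<phi> x \<ge> 0"
    and phi_int: "integral\<^sup>L lborel \<phi> = 1"
    and phi_hat_supp: "\<forall>\<xi>. fourier \<phi> \<xi> \<noteq> 0 \<longrightarrow> \<xi> \<in> cball 0 1"
    and eps: "\<epsilon> > 0"
    and E_meas: "E \<in> sets lebesgue"
    and E_fin: "emeasure lebesgue E < \<infinity>"
    and S_balls: "\<forall>R::real. \<exists>\<xi> r. r \<ge> R \<and> ball \<xi> r \<subseteq> S"
  shows "\<exists>\<rho>0 > 0. \<exists>\<xi>0. ball \<xi>0 \<rho>0 \<subseteq> S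
           \<and> L2_sq (\<lambda>x. conv (dilate \<phi> \<rho>0) (indicator E) x - indicator E x) < ennreal (\<epsilon>^2)
           \<and> (LINT x:E|lebesgue. \<bar>cos (\<xi>0 \<bullet> x)\<bar>) \<ge> measure lebesgue E / 3"
proof -
  have diff: "\<And>x. \<phi> differentiable (at x)"
    using phi_schwartz partial_derivs.base[of \<phi>] unfolding schwartz_def by blast
  have "continuous_on UNIV \<phi>"
    using diff by (simp add: differentiable_imp_continuous_within continuous_at_imp_continuous_on)
  then have phib: "\<phi> \<in> borel_measurable borel" by (rule borel_measurable_continuous_onI)
  have nonneg: "\<And>x. \<phi> x \<ge> 0" using phi_nonneg by blast
  have intg: "integrable lborel \<phi>"
    using phi_int not_integrable_integral_eq by fastforce
  have int1: "(\<integral>\<^sup>+ x. ennreal (\<phi> x) \<partial>lborel) = 1"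
    using nn_integral_eq_integral[OF intg] nonneg phi_int by simp
  have eta: "\<epsilon>^2 > 0" using eps by simp
  obtain \<rho>0 where rho: "\<rho>0 > 0"
    and L2: "L2_sq (\<lambda>x. conv (dilate \<phi> \<rho>0) (indicator E) x - indicator E x) < ennreal (\<epsilon>^2)"
    using partA[OF phib nonneg int1 E_meas E_fin eta] by blast
  obtain \<xi>0 where "ball \<xi>0 \<rho>0 \<subseteq> S" "(LINT x:E|lebesgue. \<bar>cos (\<xi>0 \<bullet> x)\<bar>) \<ge> measure lebesgue E / 3"
    using partB[OF E_meas E_fin rho S_balls] by blast
  then show ?thesis using rho L2 by blast
qed

end
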